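(* Consider the repeated long trading strategy described in the context, for fixed levels $L<D<U$ with $U-D>c$, fixed leverage $f\ge 0$, and a continuous log-price process $(X_t)$. Then the long-run return $\mu=\lim_{t\to\infty}\frac1t\ln\frac{W_t}{W_0}$ of the strategy, as a function of $f$, $D$, $U$ for the given stop-loss $L$, is $$\mu(f,D,U\mid L)=\frac{p^+\ln(1+f v^+)+p^-\ln(1+f v^-)}{p^+\,\mathbb{E}[\tau^+]+p^-\,\mathbb{E}[\tau^-]}.$$
   Context: An investor can hold a risk-free asset with zero interest rate and a risky security with price $p_t=e^{X_t}$, where $(X_t)_{t\ge0}$ is a continuous stochastic process. Transaction costs are proportional to the price, with total cost parameter $c>0$ per trade. Fix a stop-loss level $L$, an entry band $D$ and an exit band $U$ with $L<D<U$ and $U-D>c$, and a leverage $f\ge0$ (the fraction of current wealth invested in the risky security; $f>1$ means borrowing). The strategy: when $X$ reaches $D$, the investor invests the fraction $f$ of his whole wealth in the risky security (the rest in the risk-free asset); the position is closed the first time $X$ leaves the interval $(L,U)$, i.e. at $U$ (positive scenario, profit) or at $L$ (negative scenario, stop-loss). After closing, he waits until $X$ returns to $D$ and repeats. Let $\tau_e=\inf\{t:X_t\notin(L,U)\}$ with $X_0=D$, $p^+=\mathbb{P}[X_{\tau_e}=U\mid X_0=D]$, $p^-=\mathbb{P}[X_{\tau_e}=L\mid X_0=D]=1-p^+$. Let $\tau_p(U\rightsquigarrow D)=\inf\{t:X_t\le D\mid X_0=U\}$ and $\tau_p(L\rightsquigarrow D)=\inf\{t:X_t\ge D\mid X_0=L\}$.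 The trade length (time between two successive trades) is $\tau^+=\tau_e+\tau_p(U\rightsquigarrow D)$ in the positive scenario and $\tau^-=\tau_e+\tau_p(L\rightsquigarrow D)$ in the negative scenario; $\mathbb{E}[\tau^\pm]$ denote the expected trade lengths in each scenario. Set $v^+=e^{U-D-c}-1>0$ and $v^-=e^{L-D-c}-1<0$. The wealth at successive trade times satisfies $W_{t_{i+1}}=W_{t_i}(1+f v)$, with $v=v^+$ in the positive and $v=v^-$ in the negative scenario; $W_t$ denotes the wealth right after the last trade before $t$. Successive trades (outcomes and trade lengths) are independent and identically distributed. *)

theory Defs
  imports "HOL-Probability.Probability"
begin

text \<open>Net relative gains of one round trip (entry at D, exit at U resp. L, total cost c).\<close>
definition v_plus :: "real \<Rightarrow> real \<Rightarrow> real \<Rightarrow> real" where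
  "v_plus D U c = exp (U - D - c) - 1"

definition v_minus :: "real \<Rightarrow> real \<Rightarrow> real \<Rightarrow> real" where
  "v_minus L D c = exp (L - D - c) - 1"

text \<open>Trade i has outcome S i (True = positive scenario, exit at U; False = stop-loss at L)
  and length tau i. Trade times: t_0 = 0, t_(n+1) = tau 0 + ... + tau n.\<close>
definition n_trades :: "(nat \<Rightarrow> 'a \<Rightarrow> real) \<Rightarrow> real \<Rightarrow> 'a \<Rightarrow> nat" where
  "n_trades tau t \<omega> = card {n. (\<Sum>i\<le>n. tau i \<omega>) \<le> t}"

text \<open>Wealth right after the last trade before t: W_(t_(i+1)) = W_(t_i) (1 + f v).\<close>
definition wealth :: "real \<Rightarrow> real \<Rightarrow> real \<Rightarrow> real \<Rightarrow> (nat \<Rightarrow> 'a \<Rightarrow> bool)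
    \<Rightarrow> (nat \<Rightarrow> 'a \<Rightarrow> real) \<Rightarrow> real \<Rightarrow> 'a \<Rightarrow> real" where
  "wealth W0 f vp vm S tau t \<omega> =
     W0 * (\<Prod>i<n_trades tau t \<omega>. 1 + f * (if S i \<omega> then vp else vm))"

definition cond_mean :: "'a measure \<Rightarrow> ('a \<Rightarrow> real) \<Rightarrow> 'a set \<Rightarrow> real" where
  "cond_mean M Y A = (\<integral>\<omega>. indicator A \<omega> * Y \<omega> \<partial>M) / measure M A"

end

theory Submission
  imports Defs
begin


lemma cesaro0:
  fixes b :: "nat \<Rightarrow> real"
  assumes "b \<longlonglongrightarrow> 0"
  shows "(\<lambda>n. (\<Sum>i<n. b i) / n) \<longlonglongrightarrow> 0"
proof (rule LIMSEQ_I)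
  fix r :: real assume r: "r > 0"
  from LIMSEQ_D[OF assms, of "r/2"] r obtain N where N: "\<And>i. i \<ge> N \<Longrightarrow> \<bar>b i\<bar> < r/2" by auto
  define C where "C = (\<Sum>i<N. \<bar>b i\<bar>)"
  have C0: "C \<ge> 0" unfolding C_def by (intro sum_nonneg) auto
  obtain K :: nat where K: "real K > 2 * C / r" using reals_Archimedean2 by blast
  show "\<exists>no. \<forall>n\<ge>no. norm ((\<Sum>i<n. b i) / real n - 0) < r"
  proof (intro exI allI impI)
    fix n assume n: "n \<ge> max (Suc N) K"
    have split: "(\<Sum>i<n. b i) = (\<Sum>i<N. b i) + (\<Sum>i\<in>{N..<n}. b i)"
      using n by (metis (no_types) lessThan_atLeast0 max.bounded_iff nat_le_linear not_less_eq_eq sum.atLeastLessThan_concat zero_le)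
    have "\<bar>\<Sum>i<N. b i\<bar> \<le> C" unfolding C_def by (rule sum_abs)
    moreover have "\<bar>\<Sum>i\<in>{N..<n}. b i\<bar> \<le> (\<Sum>i\<in>{N..<n}. r/2)"
      by (rule order_trans[OF sum_abs]) (intro sum_mono, use N in force)
    moreover have "(\<Sum>i\<in>{N..<n}. r/2) \<le> real n * (r/2)" using r by simp
    ultimately have "\<bar>\<Sum>i<n. b i\<bar> \<le> C + real n * (r/2)" unfolding split by linarith
    moreover have "real n > 2 * C / r" using n K by linarith
    hence "C < real n * (r/2)" using r by (simp add: field_simps)
    ultimately have "\<bar>\<Sum>i<n. b i\<bar> < real n * r" by linarith
    moreover have "real n > 0" using n by simp
    ultimately show "norm ((\<Sum>i<n. b i) / real n - 0) < r"
      by (simp add: abs_divide field_simps)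
  qed
qed

lemma cesaro:
  fixes a :: "nat \<Rightarrow> real"
  assumes "a \<longlonglongrightarrow> l"
  shows "(\<lambda>n. (\<Sum>i<n. a i) / n) \<longlonglongrightarrow> l"
proof -
  have "(\<lambda>n. (\<Sum>i<n. a i - l) / n) \<longlonglongrightarrow> 0"
    by (rule cesaro0) (use assms tendsto_diff[OF assms tendsto_const[of l]] in simp)
  hence "(\<lambda>n. (\<Sum>i<n. a i - l) / n + l) \<longlonglongrightarrow> 0 + l" by (intro tendsto_add) auto
  moreover have "eventually (\<lambda>n. (\<Sum>i<n. a i - l) / n + l = (\<Sum>i<n. a i) / n) sequentially"
    using eventually_gt_at_top[of 0] by eventually_elim (simp add: sum_subtractf field_simps)
  ultimately show ?thesis by (simp add: tendsto_cong)
qed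


definition kk :: "real \<Rightarrow> nat \<Rightarrow> nat" where
  "kk \<alpha> n = nat \<lfloor>\<alpha> ^ n\<rfloor>"

lemma kk_ge1: "\<alpha> \<ge> 1 \<Longrightarrow> kk \<alpha> n \<ge> 1"
  unfolding kk_def by (simp add: one_le_power le_nat_floor)

lemma kk_le: "\<alpha> \<ge> 1 \<Longrightarrow> real (kk \<alpha> n) \<le> \<alpha> ^ n"
  unfolding kk_def using one_le_power[of \<alpha> n]
  by (metis floor_le_zero le_nat_floor nat_le_0 of_nat_floor order.trans zero_le_one)

lemma kk_gt: "\<alpha> \<ge> 1 \<Longrightarrow> \<alpha> ^ n < real (kk \<alpha> n) + 1"
  unfolding kk_def using one_le_power[of \<alpha> n]
  by (smt (verit) floor_correct of_int_floor_le of_nat_nat real_of_int_floor_add_one_gt zero_le_floor)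

lemma kk_half: "\<alpha> \<ge> 1 \<Longrightarrow> \<alpha> ^ n \<le> 2 * real (kk \<alpha> n)"
  using kk_gt[of \<alpha> n] kk_ge1[of \<alpha> n] by linarith

lemma kk_mono: "\<alpha> \<ge> 1 \<Longrightarrow> m \<le> n \<Longrightarrow> kk \<alpha> m \<le> kk \<alpha> n"
  unfolding kk_def by (intro nat_mono floor_mono power_increasing) auto

lemma kk_unbounded: "\<alpha> > 1 \<Longrightarrow> \<exists>n. real (kk \<alpha> n) \<ge> B"
proof -
  assume a: "\<alpha> > 1"
  obtain n where "B + 1 < \<alpha> ^ n" using real_arch_pow[OF a] by blast
  thus ?thesis using kk_gt[of \<alpha> n] a by (intro exI[of _ n]) linarith
qed

lemma kk_ratio:
  assumes "\<alpha> \<ge> 1" "\<delta> > 0" "real (kk \<alpha> n) \<ge> 1 / \<delta>"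
  shows "real (kk \<alpha> (Suc n)) \<le> \<alpha> * (1 + \<delta>) * real (kk \<alpha> n)"
proof -
  have "real (kk \<alpha> (Suc n)) \<le> \<alpha> * \<alpha> ^ n" using kk_le[OF assms(1), of "Suc n"] by simp
  also have "\<dots> \<le> \<alpha> * (real (kk \<alpha> n) + 1)" using kk_gt[OF assms(1), of n] assms(1)
    by (intro mult_left_mono) auto
  also have "1 \<le> \<delta> * real (kk \<alpha> n)" using assms(2,3) by (simp add: field_simps)
  hence "\<alpha> * (real (kk \<alpha> n) + 1) \<le> \<alpha> * (1 + \<delta>) * real (kk \<alpha> n)"
    using assms(1) by (simp add: algebra_simps)
  finally show ?thesis .
qed

lemma up_bound:
  fixes a b x k1 k2 u c :: real
  assumes "0 \<le> a" "a \<le> b" "0 < k1" "k1 \<le> x" "b \<le> u * k2" "k2 \<le> c * k1" "0 \<le> u"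
  shows "a / x \<le> u * c"
proof -
  have "a / x \<le> b / x" using assms by (intro divide_right_mono) auto
  also have "\<dots> \<le> b / k1" using assms by (intro divide_left_mono) auto
  also have "\<dots> \<le> (u * k2) / k1" using assms by (intro divide_right_mono) auto
  also have "\<dots> \<le> (u * (c * k1)) / k1" using assms by (intro divide_right_mono mult_left_mono) auto
  also have "\<dots> = u * c" using assms by simp
  finally show ?thesis .
qed

lemma low_bound:
  fixes a b x k1 k2 l c :: real
  assumes "0 \<le> l" "b \<le> a" "0 < k1" "x \<le> k2" "0 < x" "l * k1 \<le> b" "k2 \<le> c * k1" "0 < c"
  shows "l / c \<le> a / x"
proof -
  have b0: "0 \<le> b" using assms(1,3,6) by (smt (verit) mult_nonneg_nonneg)
  have "l / c = (l * k1) / (c * k1)" using assms by simp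
  also have "\<dots> \<le> b / (c * k1)" using assms by (intro divide_right_mono) auto
  also have "\<dots> \<le> b / k2" using assms b0 by (intro divide_left_mono) (auto intro: mult_pos_pos)
  also have "\<dots> \<le> b / x" using assms b0 by (intro divide_left_mono) (auto intro: mult_pos_pos)
  also have "\<dots> \<le> a / x" using assms by (intro divide_right_mono) auto
  finally show ?thesis .
qed

lemma select_index:
  fixes k :: "nat \<Rightarrow> nat"
  assumes mono: "\<And>a b. a \<le> b \<Longrightarrow> k a \<le> k b" and kN: "k N \<le> m" and ex: "\<exists>p. m < k p"
  shows "\<exists>n\<ge>N. k n \<le> m \<and> m < k (Suc n)"
proof -
  define p where "p = (LEAST p. m < k p)"
  have p1: "m < k p" unfolding p_def by (rule LeastI_ex[OF ex])
  have pN: "p > N"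
  proof (rule ccontr)
    assume "\<not> N < p" hence "p \<le> N" by simp
    hence "k p \<le> k N" by (rule mono)
    with p1 kN show False by simp
  qed
  then obtain n where n: "p = Suc n" "n \<ge> N" by (metis Suc_le_D less_eq_Suc_le Suc_le_mono)
  have "\<not> m < k n" unfolding p_def
    by (rule not_less_Least) (use n in \<open>simp add: p_def\<close>)
  thus ?thesis using n p1 by (intro exI[of _ n]) auto
qed

lemma interp:
  fixes T :: "nat \<Rightarrow> real" and \<mu> :: real
  assumes mono: "\<And>m m'. m \<le> m' \<Longrightarrow> T m \<le> T m'"
    and T0: "\<And>m. T m \<ge> 0"
    and conv: "\<And>j. (\<lambda>n. T (kk (1 + 1 / (Suc j)) n) / kk (1 + 1 / (Suc j)) n) \<longlonglongrightarrow> \<mu>"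
  shows "(\<lambda>m. T m / m) \<longlonglongrightarrow> \<mu>"
proof -
  have mu0: "\<mu> \<ge> 0"
  proof (rule LIMSEQ_le_const[OF conv[of 0]])
    show "\<exists>N. \<forall>n\<ge>N. 0 \<le> T (kk (1 + 1 / real (Suc 0)) n) / real (kk (1 + 1 / real (Suc 0)) n)"
      using T0 by (intro exI[of _ 0] allI impI divide_nonneg_nonneg) auto
  qed
  show ?thesis
  proof (rule LIMSEQ_I)
    fix \<epsilon> :: real assume e: "\<epsilon> > 0"
    obtain j0 :: nat where j0: "(4 + 3 * \<mu>) / \<epsilon> < real j0" using reals_Archimedean2 by blast
    define j where "j = j0"
    have j: "real (Suc j) > (4 + 3 * \<mu>) / \<epsilon>" using j0 unfolding j_def by simp
    define \<eta> where "\<eta> = 1 / real (Suc j)"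
    define \<alpha> where "\<alpha> = 1 + \<eta>"
    have eta0: "\<eta> > 0" "\<eta> \<le> 1" unfolding \<eta>_def by auto
    have etaeps: "\<eta> * (4 + 3 * \<mu>) < \<epsilon>"
      using j e mu0 unfolding \<eta>_def by (simp add: field_simps)
    have a1: "\<alpha> \<ge> 1" unfolding \<alpha>_def using eta0 by simp
    have a1': "\<alpha> > 1" unfolding \<alpha>_def using eta0 by simp
    define k where "k = kk \<alpha>"
    have convk: "(\<lambda>n. T (k n) / k n) \<longlonglongrightarrow> \<mu>" using conv[of j] unfolding k_def \<alpha>_def \<eta>_def .
    from LIMSEQ_D[OF convk eta0(1)] obtain N1 where N1: "\<And>n. n \<ge> N1 \<Longrightarrow> \<bar>T (k n) / k n - \<mu>\<bar> < \<eta>"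
      by auto
    obtain N2 where N2: "real (k N2) \<ge> 1 / \<eta>" using kk_unbounded[OF a1'] unfolding k_def by blast
    define N where "N = max N1 N2"
    have kmono: "m \<le> n \<Longrightarrow> k m \<le> k n" for m n using kk_mono[OF a1] unfolding k_def by auto
    have kN: "n \<ge> N \<Longrightarrow> real (k n) \<ge> 1 / \<eta>" for n
    proof -
      assume "n \<ge> N" hence "N2 \<le> n" unfolding N_def by simp
      hence "k N2 \<le> k n" by (rule kmono)
      hence "real (k N2) \<le> real (k n)" by simp
      thus ?thesis using N2 by linarith
    qed
    have aa: "\<alpha> * (1 + \<eta>) \<le> 1 + 3 * \<eta>"
    proof -
      have "\<eta> * \<eta> \<le> \<eta> * 1" using eta0 by (intro mult_left_mono) auto
      moreover have "\<alpha> * (1 + \<eta>) = 1 + 2 * \<eta> + \<eta> * \<eta>" unfolding \<alpha>_def by (simp add: algebra_simps)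
      ultimately show ?thesis by linarith
    qed
    have ratio: "n \<ge> N \<Longrightarrow> real (k (Suc n)) \<le> (1 + 3 * \<eta>) * real (k n)" for n
    proof -
      assume nN: "n \<ge> N"
      have "real (k (Suc n)) \<le> \<alpha> * (1 + \<eta>) * real (k n)"
        using kk_ratio[OF a1 eta0(1) kN[OF nN, unfolded k_def]] unfolding k_def by auto
      also have "\<dots> \<le> (1 + 3 * \<eta>) * real (k n)" using aa by (intro mult_right_mono) auto
      finally show ?thesis .
    qed
    have k1: "real (k n) \<ge> 1" for n using kk_ge1[OF a1, of n] unfolding k_def by simp
    have ex: "\<exists>p. m < k p" for m
    proof -
      obtain n where "real (k n) \<ge> real m + 1" using kk_unbounded[OF a1'] unfolding k_def by blast
      hence "m < k n" by linarith
      thus ?thesis by blast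
    qed
    have upper: "(\<mu> + \<eta>) * (1 + 3 * \<eta>) < \<mu> + \<epsilon>"
    proof -
      have "\<eta> * \<eta> \<le> \<eta> * 1" using eta0 by (intro mult_left_mono) auto
      moreover have "(\<mu> + \<eta>) * (1 + 3 * \<eta>) = \<mu> + \<eta> + 3 * (\<eta> * \<mu>) + 3 * (\<eta> * \<eta>)"
        by (simp add: algebra_simps)
      moreover have "\<eta> * (4 + 3 * \<mu>) = 4 * \<eta> + 3 * (\<eta> * \<mu>)" by (simp add: algebra_simps)
      ultimately show ?thesis using etaeps by linarith
    qed
    have lower: "\<mu> - \<epsilon> < (\<mu> - \<eta>) / (1 + 3 * \<eta>)"
    proof -
      have "0 \<le> \<eta> * \<epsilon>" using eta0 e by simp
      moreover have "(\<mu> - \<epsilon>) * (1 + 3 * \<eta>) = \<mu> - \<epsilon> + 3 * (\<eta> * \<mu>) - 3 * (\<eta> * \<epsilon>)"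
        by (simp add: algebra_simps)
      moreover have "\<eta> * (4 + 3 * \<mu>) = 4 * \<eta> + 3 * (\<eta> * \<mu>)" by (simp add: algebra_simps)
      ultimately have "(\<mu> - \<epsilon>) * (1 + 3 * \<eta>) < \<mu> - \<eta>" using etaeps eta0 by linarith
      thus ?thesis using eta0 by (simp add: pos_less_divide_eq)
    qed
    have smalleta: "\<eta> < \<epsilon>"
    proof -
      have "\<eta> * 1 \<le> \<eta> * (4 + 3 * \<mu>)" using eta0 mu0 by (intro mult_left_mono) auto
      thus ?thesis using etaeps by linarith
    qed
    show "\<exists>no. \<forall>m\<ge>no. norm (T m / real m - \<mu>) < \<epsilon>"
    proof (intro exI[of _ "k N"] allI impI)
      fix m assume m: "m \<ge> k N"
      have m1: "real m \<ge> 1" using k1[of N] m by (smt (verit) of_nat_le_iff)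
      obtain n where n: "n \<ge> N" "k n \<le> m" "m < k (Suc n)"
        using select_index[of k N m, OF kmono m ex] by blast
      have nN1: "n \<ge> N1" "Suc n \<ge> N1" using n(1) unfolding N_def by auto
      have c1: "\<bar>T (k n) / k n - \<mu>\<bar> < \<eta>" using N1[OF nN1(1)] .
      have c2: "\<bar>T (k (Suc n)) / k (Suc n) - \<mu>\<bar> < \<eta>" using N1[OF nN1(2)] .
      have kp1: "real (k n) > 0" using k1[of n] by linarith
      have kp2: "real (k (Suc n)) > 0" using k1[of "Suc n"] by linarith
      have b2: "T (k (Suc n)) \<le> (\<mu> + \<eta>) * real (k (Suc n))"
      proof -
        have "T (k (Suc n)) / k (Suc n) \<le> \<mu> + \<eta>" using c2 by linarith
        thus ?thesis using kp2 by (simp add: pos_divide_le_eq)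
      qed
      have b1: "(\<mu> - \<eta>) * real (k n) \<le> T (k n)"
      proof -
        have "\<mu> - \<eta> \<le> T (k n) / k n" using c1 by linarith
        thus ?thesis using kp1 by (simp add: pos_le_divide_eq)
      qed
      have r: "real (k (Suc n)) \<le> (1 + 3 * \<eta>) * real (k n)" using ratio[OF n(1)] .
      have up: "T m / m \<le> (\<mu> + \<eta>) * (1 + 3 * \<eta>)"
        by (rule up_bound[OF T0 mono kp1 _ b2 r]) (use n mu0 eta0 in auto)
      have low: "T m / m > \<mu> - \<epsilon>"
      proof (cases "\<mu> - \<eta> \<le> 0")
        case True
        moreover have "T m / m \<ge> 0" using T0[of m] by simp
        ultimately show ?thesis using smalleta by linarith
      next
        case False
        have "(\<mu> - \<eta>) / (1 + 3 * \<eta>) \<le> T m / m"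
          by (rule low_bound[OF _ mono kp1 _ _ b1 r]) (use False n m1 eta0 in auto)
        thus ?thesis using lower by linarith
      qed
      show "norm (T m / real m - \<mu>) < \<epsilon>" using up low upper by simp
    qed
  qed
qed




lemma recip_sq_le:
  fixes a :: real assumes a: "a \<ge> 1"
  shows "1 / a\<^sup>2 \<le> 2 / a - 2 / (a + 1)"
proof -
  have e1: "2 / a - 2 / (a + 1) = 2 / (a * (a + 1))" using a by (simp add: field_simps)
  have e2: "1 / a\<^sup>2 = 2 / (2 * a * a)" using a by (simp add: power2_eq_square)
  have "a * (a + 1) \<le> 2 * a * a" using a by (simp add: algebra_simps power2_eq_square)
  hence "2 / (2 * a * a) \<le> 2 / (a * (a + 1))" using a by (intro frac_le) auto
  thus ?thesis using e1 e2 by simp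
qed

lemma S_bound:
  fixes x :: real assumes x: "x > 0"
  defines "y \<equiv> max x 1"
  shows "(\<Sum>i<K. if x \<le> real (Suc i) then 1 / (real (Suc i))\<^sup>2 else 0) \<le> 2 * max 0 (1 / y - 1 / (real K + 1))"
proof (induction K)
  case 0 then show ?case by simp
next
  case (Suc K)
  have y1: "y \<ge> 1" "y \<ge> x" unfolding y_def by auto
  show ?case
  proof (cases "x \<le> real (Suc K)")
    case True
    hence yK: "y \<le> real K + 1" unfolding y_def by auto
    hence "1 / (real K + 1) \<le> 1 / y" using y1 by (intro divide_left_mono) auto
    hence m1: "max 0 (1 / y - 1 / (real K + 1)) = 1 / y - 1 / (real K + 1)" by simp
    have m2: "1 / (real K + 2) \<le> 1 / y" using y1 yK by (intro divide_left_mono) auto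
    have e: "real (Suc K) + 1 = real K + 2" by simp
    have r: "1 / (real K + 1)\<^sup>2 \<le> 2 / (real K + 1) - 2 / (real K + 1 + 1)"
      by (rule recip_sq_le) simp
    have "(\<Sum>i<Suc K. if x \<le> real (Suc i) then 1 / (real (Suc i))\<^sup>2 else 0)
        = (\<Sum>i<K. if x \<le> real (Suc i) then 1 / (real (Suc i))\<^sup>2 else 0) + 1 / (real K + 1)\<^sup>2"
      using True by (simp add: add.commute)
    also have "\<dots> \<le> 2 * (1 / y - 1 / (real K + 1)) + 1 / (real K + 1)\<^sup>2"
      using Suc.IH m1 by simp
    also have "\<dots> \<le> 2 * (1 / y - 1 / (real K + 2))" using r by (simp add: algebra_simps)
    finally show ?thesis unfolding e using m2 by linarith
  next
    case False
    hence "y > real K + 1" unfolding y_def by auto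
    hence "1 / y < 1 / (real K + 1)" by (intro divide_strict_left_mono) auto
    hence "max 0 (1 / y - 1 / (real K + 1)) = 0" by simp
    moreover have "(\<Sum>i<Suc K. if x \<le> real (Suc i) then 1 / (real (Suc i))\<^sup>2 else 0)
        = (\<Sum>i<K. if x \<le> real (Suc i) then 1 / (real (Suc i))\<^sup>2 else 0)"
      using False by simp
    moreover have "0 \<le> 2 * max 0 (1 / y - 1 / (real (Suc K) + 1))" by simp
    ultimately show ?thesis using Suc.IH by (smt (verit))
  qed
qed

lemma sq_sum_bound:
  fixes x :: real assumes x: "x \<ge> 0"
  shows "(\<Sum>i<K. (if x \<le> real (Suc i) then x else 0)\<^sup>2 / (real (Suc i))\<^sup>2) \<le> 2 * x"
proof (cases "x = 0")
  case True then show ?thesis by simp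
next
  case False
  hence xp: "x > 0" using x by simp
  define y where "y = max x 1"
  have y: "y \<ge> 1" "y \<ge> x" unfolding y_def by auto
  have "(\<Sum>i<K. (if x \<le> real (Suc i) then x else 0)\<^sup>2 / (real (Suc i))\<^sup>2)
      = x\<^sup>2 * (\<Sum>i<K. if x \<le> real (Suc i) then 1 / (real (Suc i))\<^sup>2 else 0)"
    unfolding sum_distrib_left by (intro sum.cong refl) (auto simp: power2_eq_square)
  also have "\<dots> \<le> x\<^sup>2 * (2 * max 0 (1 / y - 1 / (real K + 1)))"
    using S_bound[OF xp, of K] unfolding y_def by (intro mult_left_mono) auto
  also have "\<dots> \<le> x\<^sup>2 * (2 * (1 / y))"
  proof -
    have "0 \<le> 1 / (real K + 1)" by simp
    hence "max 0 (1 / y - 1 / (real K + 1)) \<le> 1 / y" using y by (intro max.boundedI) auto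
    thus ?thesis by (intro mult_left_mono) auto
  qed
  also have "\<dots> \<le> x\<^sup>2 * (2 * (1 / x))" using y xp by (intro mult_left_mono divide_left_mono) auto
  also have "\<dots> = 2 * x" using xp by (simp add: power2_eq_square)
  finally show ?thesis .
qed

lemma geom_tail:
  fixes \<beta> :: real
  assumes "finite F" "\<And>n. n \<in> F \<Longrightarrow> n0 \<le> n" "0 \<le> \<beta>" "\<beta> < 1"
  shows "(\<Sum>n\<in>F. \<beta> ^ n) \<le> \<beta> ^ n0 / (1 - \<beta>)"
proof -
  have "(\<Sum>n\<in>F. \<beta> ^ n) = (\<Sum>n\<in>F. \<beta> ^ n0 * \<beta> ^ (n - n0))"
    using assms(2) by (intro sum.cong) (auto simp: power_add[symmetric])
  also have "\<dots> = \<beta> ^ n0 * (\<Sum>n\<in>F. \<beta> ^ (n - n0))" by (simp add: sum_distrib_left)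
  also have "(\<Sum>n\<in>F. \<beta> ^ (n - n0)) = (\<Sum>j\<in>(\<lambda>n. n - n0) ` F. \<beta> ^ j)"
  proof (rule sum.reindex[symmetric, unfolded comp_def])
    show "inj_on (\<lambda>n. n - n0) F" using assms(2) by (intro inj_onI) (metis le_add_diff_inverse)
  qed
  also have "\<dots> \<le> (\<Sum>j. \<beta> ^ j)"
    by (rule sum_le_suminf) (use assms in \<open>auto intro!: summable_geometric\<close>)
  also have "\<dots> = 1 / (1 - \<beta>)" using assms by (intro suminf_geometric) auto
  finally have "(\<Sum>n\<in>F. \<beta> ^ n) \<le> \<beta> ^ n0 * (1 / (1 - \<beta>))"
    using assms(3) by (smt (verit) mult_left_mono zero_le_power)
  thus ?thesis by simp
qed

lemma inner_bound:
  fixes \<alpha> :: real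
  assumes a: "\<alpha> > 1"
  defines "\<beta> \<equiv> 1 / \<alpha>\<^sup>2"
  shows "(\<Sum>n\<in>{n. n < N \<and> i < kk \<alpha> n}. 1 / (real (kk \<alpha> n))\<^sup>2) \<le> 4 / (1 - \<beta>) / (real (Suc i))\<^sup>2"
proof -
  define F where "F = {n. n < N \<and> i < kk \<alpha> n}"
  have "1 < \<alpha> * \<alpha>" by (rule less_1_mult[OF a a])
  hence b: "0 \<le> \<beta>" "\<beta> < 1" unfolding \<beta>_def by (auto simp: power2_eq_square)
  have fin: "finite F" unfolding F_def by auto
  have termb: "1 / (real (kk \<alpha> n))\<^sup>2 \<le> 4 * \<beta> ^ n" for n
  proof -
    have h: "\<alpha> ^ n \<le> 2 * real (kk \<alpha> n)" by (rule kk_half) (use a in simp)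
    have ap: "\<alpha> ^ n > 0" using a by simp
    have kp: "real (kk \<alpha> n) > 0" using kk_ge1[of \<alpha> n] a by simp
    have "(\<alpha> ^ n)\<^sup>2 \<le> (2 * real (kk \<alpha> n))\<^sup>2" using h ap by (intro power_mono) auto
    hence "1 / (2 * real (kk \<alpha> n))\<^sup>2 \<le> 1 / (\<alpha> ^ n)\<^sup>2"
      by (intro divide_left_mono mult_pos_pos zero_less_power) (use ap kp a in auto)
    moreover have "\<beta> ^ n = 1 / (\<alpha> ^ n)\<^sup>2" unfolding \<beta>_def
      by (simp add: power_one_over power_mult[symmetric] mult.commute power2_eq_square power_mult_distrib)
    ultimately show ?thesis by (simp add: power_mult_distrib field_simps)
  qed
  show ?thesis
  proof (cases "F = {}")
    case True
    then show ?thesis unfolding F_def[symmetric] using b by simp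
  next
    case False
    define n0 where "n0 = Min F"
    have n0F: "n0 \<in> F" unfolding n0_def using fin False by simp
    have n0le: "n \<in> F \<Longrightarrow> n0 \<le> n" for n unfolding n0_def using fin by simp
    have "(\<Sum>n\<in>F. 1 / (real (kk \<alpha> n))\<^sup>2) \<le> (\<Sum>n\<in>F. 4 * \<beta> ^ n)" by (intro sum_mono termb)
    also have "\<dots> = 4 * (\<Sum>n\<in>F. \<beta> ^ n)" by (simp add: sum_distrib_left)
    also have "\<dots> \<le> 4 * (\<beta> ^ n0 / (1 - \<beta>))" using geom_tail[OF fin n0le b] by simp
    also have "\<beta> ^ n0 \<le> 1 / (real (Suc i))\<^sup>2"
    proof -
      have "real (Suc i) \<le> real (kk \<alpha> n0)" using n0F unfolding F_def by simp
      also have "\<dots> \<le> \<alpha> ^ n0" by (rule kk_le) (use a in simp)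
      finally have le: "real (Suc i) \<le> \<alpha> ^ n0" .
      have "\<beta> ^ n0 = 1 / (\<alpha> ^ n0)\<^sup>2" unfolding \<beta>_def
        by (simp add: power_one_over power_mult[symmetric] mult.commute power2_eq_square power_mult_distrib)
      also have "\<dots> \<le> 1 / (real (Suc i))\<^sup>2" using le a by (intro divide_left_mono power_mono mult_pos_pos zero_less_power) auto
      finally show ?thesis .
    qed
    hence "4 * (\<beta> ^ n0 / (1 - \<beta>)) \<le> 4 * ((1 / (real (Suc i))\<^sup>2) / (1 - \<beta>))"
      using b by (intro mult_left_mono divide_right_mono) auto
    finally show ?thesis unfolding F_def by (simp add: mult.commute)
  qed
qed

lemma double_sum_bound:
  fixes \<alpha> :: real and a :: "nat \<Rightarrow> real"
  assumes al: "\<alpha> > 1" and a0: "\<And>i. a i \<ge> 0"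
  defines "\<beta> \<equiv> 1 / \<alpha>\<^sup>2"
  shows "(\<Sum>n<N. (\<Sum>i<kk \<alpha> n. a i) / (real (kk \<alpha> n))\<^sup>2)
          \<le> 4 / (1 - \<beta>) * (\<Sum>i<kk \<alpha> N. a i / (real (Suc i))\<^sup>2)"
proof -
  define K where "K = kk \<alpha> N"
  have kle: "n < N \<Longrightarrow> kk \<alpha> n \<le> K" for n unfolding K_def by (intro kk_mono) (use al in auto)
  have "1 < \<alpha> * \<alpha>" by (rule less_1_mult[OF al al])
  hence b: "0 \<le> \<beta>" "\<beta> < 1" unfolding \<beta>_def by (auto simp: power2_eq_square)
  have "(\<Sum>n<N. (\<Sum>i<kk \<alpha> n. a i) / (real (kk \<alpha> n))\<^sup>2)
      = (\<Sum>n<N. \<Sum>i\<in>{i. i \<in> {..<K} \<and> i < kk \<alpha> n}. a i / (real (kk \<alpha> n))\<^sup>2)"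
  proof (intro sum.cong refl)
    fix n assume "n \<in> {..<N}"
    hence "{i. i \<in> {..<K} \<and> i < kk \<alpha> n} = {..<kk \<alpha> n}" using kle[of n] by auto
    thus "(\<Sum>i<kk \<alpha> n. a i) / (real (kk \<alpha> n))\<^sup>2 = (\<Sum>i\<in>{i. i \<in> {..<K} \<and> i < kk \<alpha> n}. a i / (real (kk \<alpha> n))\<^sup>2)"
      by (simp add: sum_divide_distrib)
  qed
  also have "\<dots> = (\<Sum>i<K. \<Sum>n\<in>{n. n \<in> {..<N} \<and> i < kk \<alpha> n}. a i / (real (kk \<alpha> n))\<^sup>2)"
    by (rule sum.swap_restrict) auto
  also have "\<dots> = (\<Sum>i<K. a i * (\<Sum>n\<in>{n. n < N \<and> i < kk \<alpha> n}. 1 / (real (kk \<alpha> n))\<^sup>2))"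
    by (simp add: sum_distrib_left)
  also have "\<dots> \<le> (\<Sum>i<K. a i * (4 / (1 - \<beta>) / (real (Suc i))\<^sup>2))"
    using inner_bound[OF al] a0 unfolding \<beta>_def by (intro sum_mono mult_left_mono) auto
  also have "\<dots> = 4 / (1 - \<beta>) * (\<Sum>i<K. a i / (real (Suc i))\<^sup>2)"
    unfolding sum_distrib_left by (intro sum.cong refl) (simp add: field_simps)
  finally show ?thesis unfolding K_def .
qed




lemma cnt_le:
  fixes x :: real assumes "x \<ge> 0"
  shows "(\<Sum>i<n. if real (Suc i) < x then 1 else 0 :: real) \<le> min x (real n)"
proof (induction n)
  case 0 then show ?case using assms by simp
next
  case (Suc n)
  show ?case
  proof (cases "real (Suc n) < x")
    case True
    then show ?thesis using Suc.IH by (simp add: min_def split: if_splits)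
  next
    case False
    then show ?thesis using Suc.IH by (simp add: min_def split: if_splits)
  qed
qed

lemma det_zero:
  fixes s :: "nat \<Rightarrow> real" and k :: "nat \<Rightarrow> nat"
  assumes ev: "\<And>q. eventually (\<lambda>n. \<bar>s n\<bar> < (1 / real (Suc q)) * real (k n)) sequentially"
    and kp: "\<And>n. k n > 0"
  shows "(\<lambda>n. s n / real (k n)) \<longlonglongrightarrow> 0"
proof (rule LIMSEQ_I)
  fix r :: real assume r: "r > 0"
  obtain q where q: "inverse (real (Suc q)) < r" using reals_Archimedean[OF r] by blast
  from ev[of q] obtain N where N: "\<And>n. n \<ge> N \<Longrightarrow> \<bar>s n\<bar> < (1 / real (Suc q)) * real (k n)"
    unfolding eventually_sequentially by blast
  show "\<exists>no. \<forall>n\<ge>no. norm (s n / real (k n) - 0) < r"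
  proof (intro exI[of _ N] allI impI)
    fix n assume "n \<ge> N"
    hence h: "\<bar>s n\<bar> < (1 / real (Suc q)) * real (k n)" by (rule N)
    have kpos: "real (k n) > 0" using kp[of n] by simp
    have "\<bar>s n\<bar> / real (k n) < 1 / real (Suc q)" using h kpos by (simp add: pos_divide_less_eq)
    thus "norm (s n / real (k n) - 0) < r" using q kpos by (simp add: abs_divide inverse_eq_divide)
  qed
qed

lemma ev_sum_avg:
  fixes a b :: "nat \<Rightarrow> real"
  assumes ev: "eventually (\<lambda>n. a n = b n) sequentially"
    and lim: "(\<lambda>n. (\<Sum>i<n. b i) / real n) \<longlonglongrightarrow> l"
  shows "(\<lambda>n. (\<Sum>i<n. a i) / real n) \<longlonglongrightarrow> l"
proof -
  obtain N where N: "\<And>n. n \<ge> N \<Longrightarrow> a n = b n" using ev unfolding eventually_sequentially by blast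
  define C where "C = (\<Sum>i<N. a i - b i)"
  have eq: "(\<Sum>i<n. a i) / real n = (\<Sum>i<n. b i) / real n + C / real n" if n: "n \<ge> N" for n
  proof -
    have "(\<Sum>i<n. a i - b i) = (\<Sum>i<N. a i - b i) + (\<Sum>i\<in>{N..<n}. a i - b i)"
      using n by (metis atLeast0LessThan le0 sum.atLeastLessThan_concat)
    also have "(\<Sum>i\<in>{N..<n}. a i - b i) = 0" using N by (intro sum.neutral) auto
    finally have "(\<Sum>i<n. a i) = (\<Sum>i<n. b i) + C" unfolding C_def by (simp add: sum_subtractf)
    thus ?thesis by (simp add: add_divide_distrib)
  qed
  have "(\<lambda>n. (\<Sum>i<n. b i) / real n + C / real n) \<longlonglongrightarrow> l + 0"
    by (intro tendsto_add lim lim_const_over_n)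
  moreover have "eventually (\<lambda>n. (\<Sum>i<n. b i) / real n + C / real n = (\<Sum>i<n. a i) / real n) sequentially"
    unfolding eventually_sequentially using eq by (intro exI[of _ N]) auto
  ultimately show ?thesis by (simp add: tendsto_cong)
qed

lemma kk_filterlim:
  assumes "\<alpha> > (1::real)"
  shows "filterlim (kk \<alpha>) at_top sequentially"
  unfolding filterlim_at_top
proof
  fix Z :: nat
  obtain n where n: "real (kk \<alpha> n) \<ge> real Z" using kk_unbounded[OF assms] by blast
  show "eventually (\<lambda>x. Z \<le> kk \<alpha> x) sequentially"
    unfolding eventually_sequentially
  proof (intro exI[of _ n] allI impI)
    fix x assume "n \<le> x"
    hence "kk \<alpha> n \<le> kk \<alpha> x" by (intro kk_mono) (use assms in auto)
    thus "Z \<le> kk \<alpha> x" using n by simp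
  qed
qed

locale iidn = prob_space +
  fixes X :: "nat \<Rightarrow> 'a \<Rightarrow> real"
  assumes indep: "indep_vars (\<lambda>_. borel) X UNIV"
    and ident: "\<And>i. distr M borel (X i) = distr M borel (X 0)"
    and nonneg: "\<And>i \<omega>. \<omega> \<in> space M \<Longrightarrow> X i \<omega> \<ge> 0"
    and int0: "integrable M (X 0)"
begin

lemma rv[measurable]: "X i \<in> borel_measurable M"
  using indep unfolding indep_vars_def by auto

lemma ident_integral:
  assumes g: "g \<in> borel_measurable borel"
  shows "(\<integral>\<omega>. g (X i \<omega>) \<partial>M) = (\<integral>\<omega>. (g (X 0 \<omega>) :: real) \<partial>M)"
  using integral_distr[OF rv[of i] g] integral_distr[OF rv[of 0] g] ident[of i] by simp

lemma ident_integrable: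
  assumes g: "g \<in> borel_measurable borel"
  shows "integrable M (\<lambda>\<omega>. (g (X i \<omega>) :: real)) \<longleftrightarrow> integrable M (\<lambda>\<omega>. g (X 0 \<omega>))"
  using integrable_distr_eq[OF rv[of i] g] integrable_distr_eq[OF rv[of 0] g] ident[of i] by simp

lemma ident_prob:
  assumes B: "B \<in> sets borel"
  shows "prob {\<omega>\<in>space M. X i \<omega> \<in> B} = prob {\<omega>\<in>space M. X 0 \<omega> \<in> B}"
proof -
  have "prob {\<omega>\<in>space M. X i \<omega> \<in> B} = measure (distr M borel (X i)) B"
    using measure_distr[OF rv[of i] B] by (simp add: vimage_def Int_def conj_commute)
  also have "\<dots> = measure (distr M borel (X 0)) B" using ident[of i] by simp
  also have "\<dots> = prob {\<omega>\<in>space M. X 0 \<omega> \<in> B}"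
    using measure_distr[OF rv[of 0] B] by (simp add: vimage_def Int_def conj_commute)
  finally show ?thesis .
qed

definition trunc :: "nat \<Rightarrow> real \<Rightarrow> real" where
  "trunc i x = (if x \<le> real (Suc i) then x else 0)"

lemma trunc_meas[measurable]: "trunc i \<in> borel_measurable borel"
  unfolding trunc_def by measurable

definition Y :: "nat \<Rightarrow> 'a \<Rightarrow> real" where
  "Y i \<omega> = trunc i (X i \<omega>)"

lemma Y_meas[measurable]: "Y i \<in> borel_measurable M"
  unfolding Y_def by measurable

lemma Y_nonneg: "\<omega> \<in> space M \<Longrightarrow> Y i \<omega> \<ge> 0"
  using nonneg unfolding Y_def trunc_def by auto

lemma Y_le: "Y i \<omega> \<le> real (Suc i)"
  unfolding Y_def trunc_def by auto

lemma X_eq_Y_eventually: "AE \<omega> in M. eventually (\<lambda>n. X n \<omega> = Y n \<omega>) sequentially"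
proof -
  define A where "A i = {\<omega>\<in>space M. real (Suc i) < X i \<omega>}" for i
  have A_sets[measurable]: "A i \<in> sets M" for i unfolding A_def by measurable
  have pA: "prob (A i) = prob {\<omega>\<in>space M. real (Suc i) < X 0 \<omega>}" for i
    using ident_prob[of "{real (Suc i)<..}" i] unfolding A_def by simp
  have bound: "(\<Sum>i<n. prob (A i)) \<le> expectation (X 0)" for n
  proof -
    have ms: "{\<omega>\<in>space M. real (Suc i) < X 0 \<omega>} \<in> sets M" for i by measurable
    have ii: "integrable M (indicator {\<omega>\<in>space M. real (Suc i) < X 0 \<omega>} :: 'a \<Rightarrow> real)" for i
      using ms[of i] by (simp add: less_top[symmetric])
    have "(\<Sum>i<n. prob (A i)) = (\<Sum>i<n. \<integral>\<omega>. indicator {\<omega>\<in>space M. real (Suc i) < X 0 \<omega>} \<omega> \<partial>M)"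
      using pA by simp
    also have "\<dots> = (\<integral>\<omega>. (\<Sum>i<n. indicator {\<omega>\<in>space M. real (Suc i) < X 0 \<omega>} \<omega>) \<partial>M)"
      using Bochner_Integration.integral_sum[where I="{..<n}" and M=M and f="\<lambda>i. indicator {\<omega>\<in>space M. real (Suc i) < X 0 \<omega>}"] ii by simp
    also have "\<dots> \<le> expectation (X 0)"
    proof (rule integral_mono)
      show "integrable M (\<lambda>\<omega>. \<Sum>i<n. indicator {\<omega>\<in>space M. real (Suc i) < X 0 \<omega>} \<omega> :: real)"
        by (intro Bochner_Integration.integrable_sum ii)
      show "integrable M (X 0)" by (rule int0)
      fix \<omega> assume w: "\<omega> \<in> space M"
      have "(\<Sum>i<n. indicator {\<omega>\<in>space M. real (Suc i) < X 0 \<omega>} \<omega> :: real)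
            = (\<Sum>i<n. if real (Suc i) < X 0 \<omega> then 1 else 0)"
        using w by (intro sum.cong) (auto simp: indicator_def)
      also have "\<dots> \<le> min (X 0 \<omega>) (real n)" by (rule cnt_le[OF nonneg[OF w]])
      finally show "(\<Sum>i<n. indicator {\<omega>\<in>space M. real (Suc i) < X 0 \<omega>} \<omega> :: real) \<le> X 0 \<omega>"
        by linarith
    qed
    finally show ?thesis .
  qed
  have summ: "summable (\<lambda>i. prob (A i))"
    by (rule summableI_nonneg_bounded[OF _ bound]) simp
  have "AE \<omega> in M. eventually (\<lambda>n. \<omega> \<in> space M - A n) sequentially"
    by (rule borel_cantelli_AE1[OF A_sets _ summ]) (simp add: less_top[symmetric])
  then show ?thesis
  proof eventually_elim
    case (elim \<omega>)
    then show ?case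
      by eventually_elim (auto simp: A_def Y_def trunc_def)
  qed
qed


definition m :: "nat \<Rightarrow> real" where
  "m i = expectation (Y i)"

lemma Y_bound: "AE \<omega> in M. norm (Y i \<omega>) \<le> real (Suc i)"
  using Y_nonneg Y_le by (intro AE_I2) auto

lemma Y_int[simp]: "integrable M (Y i)"
  by (rule integrable_const_bound[OF Y_bound]) simp

lemma Y2_int[simp]: "integrable M (\<lambda>\<omega>. (Y i \<omega>)\<^sup>2)"
proof (rule integrable_const_bound[where B="(real (Suc i))\<^sup>2"])
  show "AE \<omega> in M. norm ((Y i \<omega>)\<^sup>2) \<le> (real (Suc i))\<^sup>2"
    using Y_nonneg Y_le by (intro AE_I2) (auto intro!: power_mono)
qed simp

lemma m_eq: "m i = (\<integral>\<omega>. trunc i (X 0 \<omega>) \<partial>M)"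
  unfolding m_def Y_def by (rule ident_integral) simp

lemma m_conv: "m \<longlonglongrightarrow> expectation (X 0)"
proof -
  have "(\<lambda>i. \<integral>\<omega>. trunc i (X 0 \<omega>) \<partial>M) \<longlonglongrightarrow> expectation (X 0)"
  proof (rule integral_dominated_convergence[where w="X 0"])
    show "X 0 \<in> borel_measurable M" by simp
    show "(\<lambda>\<omega>. trunc i (X 0 \<omega>)) \<in> borel_measurable M" for i by measurable
    show "integrable M (X 0)" by (rule int0)
    show "AE \<omega> in M. (\<lambda>i. trunc i (X 0 \<omega>)) \<longlonglongrightarrow> X 0 \<omega>"
    proof (intro AE_I2 tendsto_eventually)
      fix \<omega>
      obtain n :: nat where n: "X 0 \<omega> \<le> real n" using real_arch_simple by blast
      show "\<forall>\<^sub>F i in sequentially. trunc i (X 0 \<omega>) = X 0 \<omega>"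
        unfolding eventually_sequentially
        by (intro exI[of _ n] allI impI) (use n in \<open>auto simp: trunc_def\<close>)
    qed
    show "AE \<omega> in M. norm (trunc i (X 0 \<omega>)) \<le> X 0 \<omega>" for i
      using nonneg by (intro AE_I2) (auto simp: trunc_def)
  qed
  moreover have "m = (\<lambda>i. \<integral>\<omega>. trunc i (X 0 \<omega>) \<partial>M)" by (rule ext) (rule m_eq)
  ultimately show ?thesis by simp
qed

definition W :: "nat \<Rightarrow> 'a \<Rightarrow> real" where
  "W i \<omega> = Y i \<omega> - m i"

lemma W_meas[measurable]: "W i \<in> borel_measurable M"
  unfolding W_def by measurable

lemma W_int[simp]: "integrable M (W i)"
  unfolding W_def by simp

lemma W_mean: "expectation (W i) = 0"
  unfolding W_def m_def by (simp add: prob_space)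

lemma W_indep: "indep_vars (\<lambda>_. borel) W UNIV"
proof -
  have "indep_vars (\<lambda>_. borel) (\<lambda>i \<omega>. (\<lambda>x. trunc i x - m i) (X i \<omega>)) UNIV"
    by (rule indep_vars_compose2[OF indep]) measurable
  thus ?thesis unfolding W_def Y_def .
qed

lemma W_cross:
  assumes "i \<noteq> j"
  shows "(\<integral>\<omega>. W i \<omega> * W j \<omega> \<partial>M) = 0"
proof -
  have ind: "indep_vars (\<lambda>_. borel) W {i, j}" by (rule indep_vars_subset[OF W_indep]) auto
  have "(\<integral>\<omega>. (\<Prod>l\<in>{i, j}. W l \<omega>) \<partial>M) = (\<Prod>l\<in>{i, j}. \<integral>\<omega>. W l \<omega> \<partial>M)"
    by (rule indep_vars_lebesgue_integral[OF _ ind]) auto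
  thus ?thesis using assms W_mean by simp
qed

lemma W_prod_int[simp]: "integrable M (\<lambda>\<omega>. W i \<omega> * W j \<omega>)"
proof (rule integrable_const_bound[where B="real (Suc i) * real (Suc j)"])
  have "\<bar>W l \<omega>\<bar> \<le> real (Suc l)" if "\<omega> \<in> space M" for l \<omega>
  proof -
    have "0 \<le> m l" unfolding m_def using Y_nonneg by (intro integral_nonneg_AE AE_I2) auto
    moreover have "m l \<le> real (Suc l)" unfolding m_def
      using integral_mono[of M "Y l" "\<lambda>_. real (Suc l)"] Y_le by (simp add: prob_space)
    ultimately show ?thesis using Y_nonneg[OF that, of l] Y_le[of l \<omega>] unfolding W_def by linarith
  qed
  thus "AE \<omega> in M. norm (W i \<omega> * W j \<omega>) \<le> real (Suc i) * real (Suc j)"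
    by (intro AE_I2) (auto simp: abs_mult intro!: mult_mono)
qed simp

lemma sq_sum: "(\<integral>\<omega>. (\<Sum>i<K. W i \<omega>)\<^sup>2 \<partial>M) = (\<Sum>i<K. \<integral>\<omega>. (W i \<omega>)\<^sup>2 \<partial>M)"
proof -
  have "(\<integral>\<omega>. (\<Sum>i<K. W i \<omega>)\<^sup>2 \<partial>M) = (\<integral>\<omega>. (\<Sum>i<K. \<Sum>j<K. W i \<omega> * W j \<omega>) \<partial>M)"
    by (simp add: power2_eq_square sum_product)
  also have "\<dots> = (\<Sum>i<K. \<integral>\<omega>. (\<Sum>j<K. W i \<omega> * W j \<omega>) \<partial>M)"
    by (rule Bochner_Integration.integral_sum) (auto intro!: Bochner_Integration.integrable_sum)
  also have "\<dots> = (\<Sum>i<K. \<Sum>j<K. \<integral>\<omega>. W i \<omega> * W j \<omega> \<partial>M)"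
    by (intro sum.cong refl Bochner_Integration.integral_sum) auto
  also have "\<dots> = (\<Sum>i<K. \<Sum>j<K. if j = i then \<integral>\<omega>. (W i \<omega>)\<^sup>2 \<partial>M else 0)"
    by (intro sum.cong refl) (auto simp: W_cross power2_eq_square)
  also have "\<dots> = (\<Sum>i<K. \<integral>\<omega>. (W i \<omega>)\<^sup>2 \<partial>M)"
    by (simp add: sum.delta)
  finally show ?thesis .
qed

definition a :: "nat \<Rightarrow> real" where
  "a i = (\<integral>\<omega>. (Y i \<omega>)\<^sup>2 \<partial>M)"

lemma a_nonneg: "a i \<ge> 0"
  unfolding a_def by (intro integral_nonneg_AE AE_I2) auto

lemma W2_le: "(\<integral>\<omega>. (W i \<omega>)\<^sup>2 \<partial>M) \<le> a i"
proof -
  have "(\<integral>\<omega>. (W i \<omega>)\<^sup>2 \<partial>M) = variance (Y i)" unfolding W_def m_def ..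
  also have "\<dots> = expectation (\<lambda>\<omega>. (Y i \<omega>)\<^sup>2) - (expectation (Y i))\<^sup>2"
    by (rule variance_eq) auto
  also have "\<dots> \<le> a i" unfolding a_def by simp
  finally show ?thesis .
qed

lemma cheb:
  assumes e: "\<epsilon> > 0" and K: "K > 0"
  shows "prob {\<omega>\<in>space M. \<bar>\<Sum>i<K. W i \<omega>\<bar> \<ge> \<epsilon> * real K} \<le> (\<Sum>i<K. a i) / (\<epsilon> * real K)\<^sup>2"
proof -
  have int2: "integrable M (\<lambda>\<omega>. (\<Sum>i<K. W i \<omega>)\<^sup>2)"
    by (simp add: power2_eq_square sum_product del: W_prod_int)
       (intro Bochner_Integration.integrable_sum W_prod_int)
  have "prob {\<omega>\<in>space M. \<bar>\<Sum>i<K. W i \<omega>\<bar> \<ge> \<epsilon> * real K}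
        \<le> (\<integral>\<omega>. (\<Sum>i<K. W i \<omega>)\<^sup>2 \<partial>M) / (\<epsilon> * real K)\<^sup>2"
    by (rule second_moment_method[OF _ int2]) (use e K in auto)
  also have "\<dots> \<le> (\<Sum>i<K. a i) / (\<epsilon> * real K)\<^sup>2"
    unfolding sq_sum by (intro divide_right_mono sum_mono W2_le) auto
  finally show ?thesis .
qed

lemma a_eq: "a i = (\<integral>\<omega>. (trunc i (X 0 \<omega>))\<^sup>2 \<partial>M)"
  unfolding a_def Y_def by (rule ident_integral) simp

lemma a_sum: "(\<Sum>i<K. a i / (real (Suc i))\<^sup>2) \<le> 2 * expectation (X 0)"
proof -
  have i2: "integrable M (\<lambda>\<omega>. (trunc i (X 0 \<omega>))\<^sup>2)" for i
    using Y2_int[of i] ident_integrable[of "\<lambda>x. (trunc i x)\<^sup>2" i] unfolding Y_def by simp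
  have "(\<Sum>i<K. a i / (real (Suc i))\<^sup>2) = (\<Sum>i<K. \<integral>\<omega>. (trunc i (X 0 \<omega>))\<^sup>2 / (real (Suc i))\<^sup>2 \<partial>M)"
    unfolding a_eq by simp
  also have "\<dots> = (\<integral>\<omega>. (\<Sum>i<K. (trunc i (X 0 \<omega>))\<^sup>2 / (real (Suc i))\<^sup>2) \<partial>M)"
    by (rule Bochner_Integration.integral_sum[symmetric]) (use i2 in auto)
  also have "\<dots> \<le> (\<integral>\<omega>. 2 * X 0 \<omega> \<partial>M)"
  proof (rule integral_mono)
    show "integrable M (\<lambda>\<omega>. \<Sum>i<K. (trunc i (X 0 \<omega>))\<^sup>2 / (real (Suc i))\<^sup>2)"
      by (intro Bochner_Integration.integrable_sum integrable_divide i2)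
    show "integrable M (\<lambda>\<omega>. 2 * X 0 \<omega>)" using int0 by simp
    fix \<omega> assume "\<omega> \<in> space M"
    thus "(\<Sum>i<K. (trunc i (X 0 \<omega>))\<^sup>2 / (real (Suc i))\<^sup>2) \<le> 2 * X 0 \<omega>"
      using sq_sum_bound[OF nonneg, of \<omega> 0 K] unfolding trunc_def by simp
  qed
  finally show ?thesis by simp
qed


lemma subseq_AE:
  assumes al: "\<alpha> > 1"
  shows "AE \<omega> in M. (\<lambda>n. (\<Sum>i<kk \<alpha> n. W i \<omega>) / real (kk \<alpha> n)) \<longlonglongrightarrow> 0"
proof -
  define \<beta> where "\<beta> = 1 / \<alpha>\<^sup>2"
  have "1 < \<alpha> * \<alpha>" by (rule less_1_mult[OF al al])
  hence b: "0 \<le> \<beta>" "\<beta> < 1" unfolding \<beta>_def by (auto simp: power2_eq_square)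
  have kp: "kk \<alpha> n > 0" for n using kk_ge1[of \<alpha> n] al by simp
  have q: "AE \<omega> in M. eventually (\<lambda>n. \<bar>\<Sum>i<kk \<alpha> n. W i \<omega>\<bar> < (1 / real (Suc q)) * real (kk \<alpha> n)) sequentially" for q
  proof -
    define \<epsilon> where "\<epsilon> = 1 / real (Suc q)"
    have e: "\<epsilon> > 0" unfolding \<epsilon>_def by simp
    define B where "B n = {\<omega>\<in>space M. \<bar>\<Sum>i<kk \<alpha> n. W i \<omega>\<bar> \<ge> \<epsilon> * real (kk \<alpha> n)}" for n
    have Bs[measurable]: "B n \<in> sets M" for n unfolding B_def by measurable
    have pB: "prob (B n) \<le> (1 / \<epsilon>\<^sup>2) * ((\<Sum>i<kk \<alpha> n. a i) / (real (kk \<alpha> n))\<^sup>2)" for n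
    proof -
      have "prob (B n) \<le> (\<Sum>i<kk \<alpha> n. a i) / (\<epsilon> * real (kk \<alpha> n))\<^sup>2"
        unfolding B_def by (rule cheb[OF e kp])
      also have "\<dots> = (1 / \<epsilon>\<^sup>2) * ((\<Sum>i<kk \<alpha> n. a i) / (real (kk \<alpha> n))\<^sup>2)"
        by (simp add: power_mult_distrib)
      finally show ?thesis .
    qed
    have summ: "summable (\<lambda>n. prob (B n))"
    proof (rule summableI_nonneg_bounded)
      show "0 \<le> prob (B n)" for n by simp
      fix N
      have "(\<Sum>n<N. prob (B n)) \<le> (\<Sum>n<N. (1 / \<epsilon>\<^sup>2) * ((\<Sum>i<kk \<alpha> n. a i) / (real (kk \<alpha> n))\<^sup>2))"
        by (intro sum_mono pB)
      also have "\<dots> = (1 / \<epsilon>\<^sup>2) * (\<Sum>n<N. (\<Sum>i<kk \<alpha> n. a i) / (real (kk \<alpha> n))\<^sup>2)"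
        by (simp add: sum_distrib_left)
      also have "\<dots> \<le> (1 / \<epsilon>\<^sup>2) * (4 / (1 - \<beta>) * (\<Sum>i<kk \<alpha> N. a i / (real (Suc i))\<^sup>2))"
        using double_sum_bound[OF al a_nonneg, where N=N] unfolding \<beta>_def
        by (intro mult_left_mono) auto
      also have "\<dots> \<le> (1 / \<epsilon>\<^sup>2) * (4 / (1 - \<beta>) * (2 * expectation (X 0)))"
        using b a_sum by (intro mult_left_mono) auto
      finally show "(\<Sum>n<N. prob (B n)) \<le> (1 / \<epsilon>\<^sup>2) * (4 / (1 - \<beta>) * (2 * expectation (X 0)))" .
    qed
    have "AE \<omega> in M. eventually (\<lambda>n. \<omega> \<in> space M - B n) sequentially"
      by (rule borel_cantelli_AE1[OF Bs _ summ]) (simp add: less_top[symmetric])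
    then show ?thesis
    proof eventually_elim
      case (elim \<omega>)
      then show ?case by eventually_elim (auto simp: B_def \<epsilon>_def)
    qed
  qed
  have "AE \<omega> in M. \<forall>q. eventually (\<lambda>n. \<bar>\<Sum>i<kk \<alpha> n. W i \<omega>\<bar> < (1 / real (Suc q)) * real (kk \<alpha> n)) sequentially"
    unfolding AE_all_countable using q by blast
  then show ?thesis
  proof eventually_elim
    case (elim \<omega>)
    show ?case by (rule det_zero) (use elim kp in auto)
  qed
qed

theorem slln: "AE \<omega> in M. (\<lambda>n. (\<Sum>i<n. X i \<omega>) / real n) \<longlonglongrightarrow> expectation (X 0)"
proof -
  define \<mu> where "\<mu> = expectation (X 0)"
  have al: "1 + 1 / real (Suc j) > (1::real)" for j by simp
  have A2: "AE \<omega> in M. \<forall>j. (\<lambda>n. (\<Sum>i<kk (1 + 1 / real (Suc j)) n. W i \<omega>) / real (kk (1 + 1 / real (Suc j)) n)) \<longlonglongrightarrow> 0"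
    unfolding AE_all_countable using subseq_AE[OF al] by blast
  have mc: "(\<lambda>n. (\<Sum>i<n. m i) / real n) \<longlonglongrightarrow> \<mu>" unfolding \<mu>_def by (rule cesaro[OF m_conv])
  show ?thesis using X_eq_Y_eventually A2 AE_space
  proof eventually_elim
    case (elim \<omega>)
    define T where "T n = (\<Sum>i<n. Y i \<omega>)" for n
    have "(\<lambda>n. T n / real n) \<longlonglongrightarrow> \<mu>"
    proof (rule interp)
      show "T p \<le> T p'" if "p \<le> p'" for p p'
        unfolding T_def using that Y_nonneg[OF elim(3)] by (intro sum_mono2) auto
      show "T p \<ge> 0" for p unfolding T_def using Y_nonneg[OF elim(3)] by (intro sum_nonneg) auto
      fix j
      define k where "k = kk (1 + 1 / real (Suc j))"
      have kfl: "filterlim k at_top sequentially" unfolding k_def by (rule kk_filterlim[OF al])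
      have c1: "(\<lambda>n. (\<Sum>i<k n. W i \<omega>) / real (k n)) \<longlonglongrightarrow> 0" using elim(2) unfolding k_def by blast
      have c2: "(\<lambda>n. (\<Sum>i<k n. m i) / real (k n)) \<longlonglongrightarrow> \<mu>"
        by (rule filterlim_compose[OF mc kfl])
      have "(\<lambda>n. (\<Sum>i<k n. W i \<omega>) / real (k n) + (\<Sum>i<k n. m i) / real (k n)) \<longlonglongrightarrow> 0 + \<mu>"
        by (intro tendsto_add c1 c2)
      moreover have "(\<Sum>i<k n. W i \<omega>) / real (k n) + (\<Sum>i<k n. m i) / real (k n) = T (k n) / real (k n)" for n
        unfolding T_def W_def by (simp add: sum_subtractf add_divide_distrib[symmetric])
      ultimately show "(\<lambda>n. T (k n) / real (k n)) \<longlonglongrightarrow> \<mu>" by simp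
    qed
    hence "(\<lambda>n. (\<Sum>i<n. Y i \<omega>) / real n) \<longlonglongrightarrow> \<mu>" unfolding T_def .
    then show ?case unfolding \<mu>_def by (rule ev_sum_avg[OF elim(1)])
  qed
qed

end



lemma renewal:
  fixes \<tau> ell :: "nat \<Rightarrow> real" and \<nu> lam :: real
  assumes pos: "\<And>i. \<tau> i > 0"
    and Sconv: "(\<lambda>n. (\<Sum>i<n. \<tau> i) / real n) \<longlonglongrightarrow> \<nu>" and nu: "\<nu> > 0"
    and Lconv: "(\<lambda>n. (\<Sum>i<n. ell i) / real n) \<longlonglongrightarrow> lam"
  shows "((\<lambda>t. (\<Sum>i<card {n. (\<Sum>i\<le>n. \<tau> i) \<le> t}. ell i) / t) \<longlongrightarrow> lam / \<nu>) at_top"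
proof -
  define S where "S n = (\<Sum>i<n. \<tau> i)" for n
  define L where "L n = (\<Sum>i<n. ell i)" for n
  have Smono: "m \<le> n \<Longrightarrow> S m \<le> S n" for m n
    unfolding S_def using pos by (intro sum_mono2) (auto intro: less_imp_le)
  have S0: "S 0 = 0" unfolding S_def by simp
  have Sunb: "\<exists>n. S n > t" for t
  proof -
    have "eventually (\<lambda>n. S n / real n > \<nu> / 2) sequentially"
      using Sconv nu unfolding S_def by (intro order_tendstoD) auto
    then obtain n0 where n0: "\<And>n. n \<ge> n0 \<Longrightarrow> S n / real n > \<nu> / 2"
      unfolding eventually_sequentially by blast
    obtain n1 :: nat where n1: "real n1 > 2 * \<bar>t\<bar> / \<nu>" using reals_Archimedean2 by blast
    define n where "n = max (Suc n0) n1"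
    have np: "real n > 0" unfolding n_def by simp
    have "S n / real n > \<nu> / 2" using n0[of n] unfolding n_def by simp
    hence "S n > \<nu> / 2 * real n" using np by (simp add: pos_less_divide_eq)
    moreover have "\<nu> / 2 * real n \<ge> \<nu> / 2 * real n1" using nu unfolding n_def by (intro mult_left_mono) auto
    moreover have "\<nu> / 2 * real n1 > \<bar>t\<bar>" using n1 nu by (simp add: field_simps)
    ultimately have "S n > t" by linarith
    thus ?thesis by blast
  qed
  define N where "N t = card {n. (\<Sum>i\<le>n. \<tau> i) \<le> t}" for t
  have setq: "{n. (\<Sum>i\<le>n. \<tau> i) \<le> t} = {n. S (Suc n) \<le> t}" for t
    unfolding S_def by (simp add: lessThan_Suc_atMost)
  define p where "p t = (LEAST n. \<not> S (Suc n) \<le> t)" for t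
  have pex: "\<exists>n. \<not> S (Suc n) \<le> t" for t
  proof -
    obtain n where "S n > t" using Sunb by blast
    hence "S (Suc n) > t" using Smono[of n "Suc n"] by simp
    thus ?thesis by (intro exI[of _ n]) simp
  qed
  have Np: "N t = p t" for t
  proof -
    have "{n. S (Suc n) \<le> t} = {..<p t}"
    proof (intro set_eqI iffI)
      fix n assume "n \<in> {n. S (Suc n) \<le> t}"
      hence h: "S (Suc n) \<le> t" by simp
      show "n \<in> {..<p t}"
      proof (rule ccontr)
        assume "n \<notin> {..<p t}" hence "p t \<le> n" by simp
        hence "S (Suc (p t)) \<le> S (Suc n)" by (intro Smono) simp
        moreover have "\<not> S (Suc (p t)) \<le> t" unfolding p_def by (rule LeastI_ex[OF pex])
        ultimately show False using h by simp
      qed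
    next
      fix n assume "n \<in> {..<p t}"
      hence "n < p t" by simp
      hence "\<not> \<not> S (Suc n) \<le> t" unfolding p_def by (rule not_less_Least)
      thus "n \<in> {n. S (Suc n) \<le> t}" by simp
    qed
    thus ?thesis unfolding N_def setq by simp
  qed
  have Nup: "t < S (Suc (N t))" for t
    unfolding Np p_def using LeastI_ex[OF pex, of t] by simp
  have Nlow: "S (N t) \<le> t" if t: "t \<ge> 0" for t
  proof (cases "N t")
    case 0 then show ?thesis using S0 t by simp
  next
    case (Suc k)
    hence "k < p t" using Np by simp
    hence "\<not> \<not> S (Suc k) \<le> t" unfolding p_def by (rule not_less_Least)
    thus ?thesis using Suc by simp
  qed
  have Nge: "K \<le> N t" if "S K \<le> t" for K t
  proof (rule ccontr)
    assume "\<not> K \<le> N t" hence "Suc (N t) \<le> K" by simp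
    hence "S (Suc (N t)) \<le> S K" by (rule Smono)
    thus False using Nup[of t] that by simp
  qed
  have Nlim: "filterlim N at_top at_top"
    unfolding filterlim_at_top
  proof
    fix K :: nat
    show "eventually (\<lambda>t. K \<le> N t) at_top"
      using eventually_ge_at_top[of "S K"] by eventually_elim (rule Nge)
  qed
  have g: "((\<lambda>t. S (N t) / real (N t)) \<longlongrightarrow> \<nu>) at_top"
    using filterlim_compose[OF Sconv[folded S_def] Nlim] .
  have h0: "(\<lambda>n. S (Suc n) / real n) \<longlonglongrightarrow> \<nu>"
  proof -
    have a1: "(\<lambda>n. S (Suc n) / real (Suc n)) \<longlonglongrightarrow> \<nu>"
      using Sconv[folded S_def] by (rule LIMSEQ_Suc)
    have a2: "(\<lambda>n. real (Suc n) / real n) \<longlonglongrightarrow> 1"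
    proof -
      have "(\<lambda>n. 1 + 1 / real n) \<longlonglongrightarrow> 1 + 0" by (intro tendsto_add tendsto_const lim_const_over_n)
      moreover have "eventually (\<lambda>n. 1 + 1 / real n = real (Suc n) / real n) sequentially"
        using eventually_gt_at_top[of 0] by eventually_elim (simp add: field_simps)
      ultimately show ?thesis by (simp add: tendsto_cong)
    qed
    have "(\<lambda>n. S (Suc n) / real (Suc n) * (real (Suc n) / real n)) \<longlonglongrightarrow> \<nu> * 1"
      by (intro tendsto_mult a1 a2)
    thus ?thesis by simp
  qed
  have h: "((\<lambda>t. S (Suc (N t)) / real (N t)) \<longlongrightarrow> \<nu>) at_top"
    using filterlim_compose[OF h0 Nlim] .
  have evN: "eventually (\<lambda>t. N t > 0 \<and> t > 0) at_top"
  proof -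
    have "eventually (\<lambda>t. 1 \<le> N t) at_top" using Nlim unfolding filterlim_at_top by blast
    thus ?thesis using eventually_gt_at_top[of 0] by eventually_elim auto
  qed
  have tN: "((\<lambda>t. t / real (N t)) \<longlongrightarrow> \<nu>) at_top"
  proof (rule tendsto_sandwich[OF _ _ g h])
    show "eventually (\<lambda>t. S (N t) / real (N t) \<le> t / real (N t)) at_top"
      using evN by eventually_elim (use Nlow in \<open>auto intro!: divide_right_mono\<close>)
    show "eventually (\<lambda>t. t / real (N t) \<le> S (Suc (N t)) / real (N t)) at_top"
      using evN by eventually_elim (use Nup in \<open>auto intro!: less_imp_le divide_strict_right_mono\<close>)
  qed
  have lN: "((\<lambda>t. L (N t) / real (N t)) \<longlongrightarrow> lam) at_top"
    using filterlim_compose[OF Lconv[folded L_def] Nlim] .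
  have "((\<lambda>t. (L (N t) / real (N t)) / (t / real (N t))) \<longlongrightarrow> lam / \<nu>) at_top"
    using nu by (intro tendsto_divide lN tN) auto
  moreover have "eventually (\<lambda>t. (L (N t) / real (N t)) / (t / real (N t)) = L (N t) / t) at_top"
    using evN by eventually_elim auto
  ultimately have "((\<lambda>t. L (N t) / t) \<longlongrightarrow> lam / \<nu>) at_top" by (rule Lim_transform_eventually)
  thus ?thesis unfolding L_def N_def .
qed




theorem proposition1:
  fixes M :: "'a measure"
    and S :: "nat \<Rightarrow> 'a \<Rightarrow> bool"
    and tau :: "nat \<Rightarrow> 'a \<Rightarrow> real"
    and L D U c f W0 :: real
  assumes "prob_space M"
    and "L < D" "D < U" "U - D > c" "c > 0" "f \<ge> 0"
    and "1 + f * v_minus L D c > 0"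
    and "W0 > 0"
    and indep: "prob_space.indep_vars M (\<lambda>_. count_space UNIV \<Otimes>\<^sub>M borel)
                  (\<lambda>i \<omega>. (S i \<omega>, tau i \<omega>)) UNIV"
    and ident: "\<And>i. distr M (count_space UNIV \<Otimes>\<^sub>M borel) (\<lambda>\<omega>. (S i \<omega>, tau i \<omega>))
                    = distr M (count_space UNIV \<Otimes>\<^sub>M borel) (\<lambda>\<omega>. (S 0 \<omega>, tau 0 \<omega>))"
    and pos: "\<And>i \<omega>. \<omega> \<in> space M \<Longrightarrow> tau i \<omega> > 0"
    and int: "integrable M (tau 0)"
  defines "p_plus \<equiv> measure M {\<omega> \<in> space M. S 0 \<omega>}"
    and "p_minus \<equiv> measure M {\<omega> \<in> space M. \<not> S 0 \<omega>}"
    and "E_plus \<equiv> cond_mean M (tau 0) {\<omega> \<in> space M. S 0 \<omega>}"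
    and "E_minus \<equiv> cond_mean M (tau 0) {\<omega> \<in> space M. \<not> S 0 \<omega>}"
  shows "AE \<omega> in M.
     ((\<lambda>t. ln (wealth W0 f (v_plus D U c) (v_minus L D c) S tau t \<omega> / W0) / t)
        \<longlongrightarrow> (p_plus * ln (1 + f * v_plus D U c) + p_minus * ln (1 + f * v_minus L D c))
             / (p_plus * E_plus + p_minus * E_minus)) at_top"
proof -
  interpret prob_space M by fact
  let ?NN = "count_space UNIV \<Otimes>\<^sub>M borel :: (bool \<times> real) measure"
  define vp where "vp = v_plus D U c"
  define vm where "vm = v_minus L D c"
  have Zm: "(\<lambda>\<omega>. (S i \<omega>, tau i \<omega>)) \<in> measurable M ?NN" for i
    using indep unfolding indep_vars_def by auto
  have taum[measurable]: "tau i \<in> borel_measurable M" for i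
    using measurable_compose[OF Zm measurable_snd] by simp
  have Sm[measurable]: "S i \<in> measurable M (count_space UNIV)" for i
    using measurable_compose[OF Zm measurable_fst] by simp
  have dd: "distr M borel (\<lambda>\<omega>. g (S i \<omega>, tau i \<omega>)) = distr M borel (\<lambda>\<omega>. g (S 0 \<omega>, tau 0 \<omega>))"
    if g: "g \<in> measurable ?NN borel" for g :: "bool \<times> real \<Rightarrow> real" and i
  proof -
    have "distr M borel (\<lambda>\<omega>. g (S i \<omega>, tau i \<omega>)) = distr (distr M ?NN (\<lambda>\<omega>. (S i \<omega>, tau i \<omega>))) borel g"
      using distr_distr[OF g Zm[of i]] by (simp add: comp_def)
    also have "\<dots> = distr (distr M ?NN (\<lambda>\<omega>. (S 0 \<omega>, tau 0 \<omega>))) borel g"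
      using ident[of i] by simp
    also have "\<dots> = distr M borel (\<lambda>\<omega>. g (S 0 \<omega>, tau 0 \<omega>))"
      using distr_distr[OF g Zm[of 0]] by (simp add: comp_def)
    finally show ?thesis .
  qed
  have indg: "indep_vars (\<lambda>_. borel) (\<lambda>i \<omega>. g (S i \<omega>, tau i \<omega>)) UNIV"
    if g: "g \<in> measurable ?NN borel" for g :: "bool \<times> real \<Rightarrow> real"
    using indep_vars_compose2[OF indep, where Y="\<lambda>_. g" and N="\<lambda>_. borel"] g by simp
  have sndm: "snd \<in> measurable ?NN borel" by simp
  define I where "I i \<omega> = (if S i \<omega> then 1 else 0 :: real)" for i \<omega>
  have Ig: "(\<lambda>p. if fst p then 1 else 0 :: real) \<in> measurable ?NN borel" by measurable
  have iT: "iidn M tau"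
  proof (unfold iidn_def iidn_axioms_def, intro conjI allI impI)
    show "prob_space M" by fact
    show "indep_vars (\<lambda>_. borel) tau UNIV" using indg[OF sndm] by simp
    show "distr M borel (tau i) = distr M borel (tau 0)" for i using dd[OF sndm, of i] by simp
    show "\<And>i \<omega>. \<omega> \<in> space M \<Longrightarrow> 0 \<le> tau i \<omega>" using pos by (simp add: less_imp_le)
    show "integrable M (tau 0)" by fact
  qed
  have Im[measurable]: "I i \<in> borel_measurable M" for i unfolding I_def by measurable
  have iI: "iidn M I"
  proof (unfold iidn_def iidn_axioms_def, intro conjI allI impI)
    show "prob_space M" by fact
    show "indep_vars (\<lambda>_. borel) I UNIV" using indg[OF Ig] unfolding I_def by simp
    show "distr M borel (I i) = distr M borel (I 0)" for i using dd[OF Ig, of i] unfolding I_def by simp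
    show "\<And>i \<omega>. \<omega> \<in> space M \<Longrightarrow> 0 \<le> I i \<omega>" unfolding I_def by simp
    show "integrable M (I 0)"
      by (rule integrable_const_bound[where B=1]) (auto simp: I_def)
  qed
  define A where "A = {\<omega> \<in> space M. S 0 \<omega>}"
  have Aev: "A \<in> events" unfolding A_def by measurable
  have Ac: "{\<omega> \<in> space M. \<not> S 0 \<omega>} = space M - A" unfolding A_def by auto
  have pm: "p_minus = 1 - p_plus" unfolding p_minus_def p_plus_def Ac A_def[symmetric]
    by (rule prob_compl[OF Aev])
  have EI: "expectation (I 0) = p_plus"
  proof -
    have "expectation (I 0) = expectation (indicator A :: 'a \<Rightarrow> real)"
      by (rule Bochner_Integration.integral_cong[OF refl]) (auto simp: I_def A_def indicator_def)
    thus ?thesis unfolding p_plus_def A_def[symmetric] using Aev by simp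
  qed
  have condm: "measure M B * cond_mean M (tau 0) B = (\<integral>\<omega>. indicator B \<omega> * tau 0 \<omega> \<partial>M)"
    if B: "B \<in> events" for B
  proof (cases "measure M B = 0")
    case True
    have "B \<in> null_sets M" using True B by (intro null_setsI) (simp_all add: emeasure_eq_measure)
    hence "AE \<omega> in M. \<omega> \<notin> B" by (rule AE_not_in)
    hence "AE \<omega> in M. indicator B \<omega> * tau 0 \<omega> = 0" by eventually_elim simp
    hence "(\<integral>\<omega>. indicator B \<omega> * tau 0 \<omega> \<partial>M) = 0" by (rule integral_eq_zero_AE)
    thus ?thesis using True by simp
  next
    case False
    thus ?thesis unfolding cond_mean_def by simp
  qed
  have Etau: "expectation (tau 0) = p_plus * E_plus + p_minus * E_minus"
  proof -
    have i1: "integrable M (\<lambda>\<omega>. indicator A \<omega> * tau 0 \<omega>)"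
      using integrable_real_mult_indicator[OF Aev int] by (simp add: mult.commute)
    have i2: "integrable M (\<lambda>\<omega>. indicator (space M - A) \<omega> * tau 0 \<omega>)"
      using integrable_real_mult_indicator[OF _ int, of "space M - A"] Aev by (simp add: mult.commute)
    have "expectation (tau 0) = (\<integral>\<omega>. indicator A \<omega> * tau 0 \<omega> + indicator (space M - A) \<omega> * tau 0 \<omega> \<partial>M)"
      by (intro Bochner_Integration.integral_cong) (auto simp: indicator_def A_def)
    also have "\<dots> = (\<integral>\<omega>. indicator A \<omega> * tau 0 \<omega> \<partial>M) + (\<integral>\<omega>. indicator (space M - A) \<omega> * tau 0 \<omega> \<partial>M)"
      by (rule Bochner_Integration.integral_add[OF i1 i2])
    also have "\<dots> = p_plus * E_plus + p_minus * E_minus"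
      unfolding p_plus_def p_minus_def E_plus_def E_minus_def Ac A_def[symmetric]
      using condm[OF Aev] condm[of "space M - A"] Aev by auto
    finally show ?thesis .
  qed
  have nu: "expectation (tau 0) > 0"
  proof -
    have ge: "expectation (tau 0) \<ge> 0" using pos by (intro integral_nonneg_AE AE_I2) (auto simp: less_imp_le)
    have "expectation (tau 0) \<noteq> 0"
    proof
      assume "expectation (tau 0) = 0"
      hence "AE \<omega> in M. tau 0 \<omega> = 0"
        using integral_nonneg_eq_0_iff_AE[OF int] pos by (auto intro: AE_I2 less_imp_le)
      hence "AE \<omega> in M. False" using AE_space by eventually_elim (metis less_irrefl pos)
      thus False by simp
    qed
    thus ?thesis using ge by simp
  qed
  define a where "a = ln (1 + f * vp)"
  define b where "b = ln (1 + f * vm)"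
  have vp0: "vp > 0" unfolding vp_def v_plus_def using assms(4) by simp
  have fp: "1 + f * vp > 0" using vp0 assms(6) by (simp add: add_pos_nonneg)
  have fm: "1 + f * vm > 0" using assms(7) unfolding vm_def .
  have AE1: "AE \<omega> in M. (\<lambda>n. (\<Sum>i<n. tau i \<omega>) / real n) \<longlonglongrightarrow> expectation (tau 0)"
    by (rule iidn.slln[OF iT])
  have AE2: "AE \<omega> in M. (\<lambda>n. (\<Sum>i<n. I i \<omega>) / real n) \<longlonglongrightarrow> p_plus"
    using iidn.slln[OF iI] unfolding EI .
  show ?thesis using AE1 AE2 AE_space
  proof eventually_elim
    case (elim \<omega>)
    define ell where "ell i = ln (1 + f * (if S i \<omega> then vp else vm))" for i
    have ellI: "ell i = b + (a - b) * I i \<omega>" for i unfolding ell_def I_def a_def b_def by auto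
    have Lconv: "(\<lambda>n. (\<Sum>i<n. ell i) / real n) \<longlonglongrightarrow> p_plus * a + p_minus * b"
    proof -
      have "(\<lambda>n. b + (a - b) * ((\<Sum>i<n. I i \<omega>) / real n)) \<longlonglongrightarrow> b + (a - b) * p_plus"
        by (intro tendsto_add tendsto_mult tendsto_const elim(2))
      moreover have "eventually (\<lambda>n. b + (a - b) * ((\<Sum>i<n. I i \<omega>) / real n) = (\<Sum>i<n. ell i) / real n) sequentially"
        using eventually_gt_at_top[of 0]
      proof eventually_elim
        case (elim n)
        have "(\<Sum>i<n. ell i) = (\<Sum>i<n. b) + (\<Sum>i<n. (a - b) * I i \<omega>)" unfolding ellI by (rule sum.distrib)
        also have "\<dots> = real n * b + (a - b) * (\<Sum>i<n. I i \<omega>)" by (simp add: sum_distrib_left)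
        finally show ?case using elim by (simp add: field_simps)
      qed
      moreover have "b + (a - b) * p_plus = p_plus * a + p_minus * b" unfolding pm by (simp add: algebra_simps)
      ultimately show ?thesis by (metis Lim_transform_eventually)
    qed
    have R: "((\<lambda>t. (\<Sum>i<card {n. (\<Sum>i\<le>n. tau i \<omega>) \<le> t}. ell i) / t) \<longlongrightarrow> (p_plus * a + p_minus * b) / expectation (tau 0)) at_top"
      by (rule renewal[OF _ elim(1) nu Lconv]) (use pos elim(3) in auto)
    have eq: "ln (wealth W0 f vp vm S tau t \<omega> / W0) / t = (\<Sum>i<card {n. (\<Sum>i\<le>n. tau i \<omega>) \<le> t}. ell i) / t" for t
    proof -
      have pf: "1 + f * (if S i \<omega> then vp else vm) > 0" for i using fp fm by auto
      have "wealth W0 f vp vm S tau t \<omega> / W0 = (\<Prod>i<n_trades tau t \<omega>. 1 + f * (if S i \<omega> then vp else vm))"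
        unfolding wealth_def using assms(8) by simp
      hence "ln (wealth W0 f vp vm S tau t \<omega> / W0) = (\<Sum>i<n_trades tau t \<omega>. ell i)"
        unfolding ell_def using pf by (simp add: ln_prod less_imp_neq[symmetric])
      thus ?thesis unfolding n_trades_def by simp
    qed
    show ?case unfolding eq[unfolded vp_def vm_def] Etau[symmetric] a_def b_def vp_def vm_def using R
      unfolding a_def b_def vp_def vm_def .
  qed
qed


end
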